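(* Let $0\to A_i\to B_i\to C\to 0$ ($i=1,2$) be short exact sequences of finite abelian groups, and put $B=B_1\times_C B_2$. Assume that the sequence for $i=2$ is a direct sum of sequences of the form $0\to\mathbb Z/n\mathbb Z\to\mathbb Z/nb_j\mathbb Z\to\mathbb Z/b_j\mathbb Z\to0$ (first map multiplication by $b_j$, second the natural projection), for a fixed positive integer $n$ and positive integers $b_j$, and that $A_1$ is annihilated by $n$. Then the projection $B\to B_2$ splits. *)

theory Defs
  imports "HOL-Algebra.Algebra"
begin

definition short_exact ::
  "('a, 'm1) monoid_scheme \<Rightarrow> ('a \<Rightarrow> 'b) \<Rightarrow> ('b, 'm2) monoid_scheme \<Rightarrow> ('b \<Rightarrow> 'c)
   \<Rightarrow> ('c, 'm3) monoid_scheme \<Rightarrow> bool" where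
  "short_exact A f B g C \<longleftrightarrow>
     group A \<and> group B \<and> group C \<and>
     f \<in> hom A B \<and> g \<in> hom B C \<and>
     inj_on f (carrier A) \<and> g ` carrier B = carrier C \<and>
     f ` carrier A = kernel B C g"

definition ses_iso ::
  "('a, 'm1) monoid_scheme \<Rightarrow> ('a \<Rightarrow> 'b) \<Rightarrow> ('b, 'm2) monoid_scheme \<Rightarrow> ('b \<Rightarrow> 'c)
   \<Rightarrow> ('c, 'm3) monoid_scheme \<Rightarrow>
   ('x, 'n1) monoid_scheme \<Rightarrow> ('x \<Rightarrow> 'y) \<Rightarrow> ('y, 'n2) monoid_scheme \<Rightarrow> ('y \<Rightarrow> 'z)
   \<Rightarrow> ('z, 'n3) monoid_scheme \<Rightarrow> bool" where
  "ses_iso A f B g C A' f' B' g' C' \<longleftrightarrow>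
     (\<exists>\<alpha> \<beta> \<gamma>. \<alpha> \<in> iso A A' \<and> \<beta> \<in> iso B B' \<and> \<gamma> \<in> iso C C' \<and>
       (\<forall>x \<in> carrier A. \<beta> (f x) = f' (\<alpha> x)) \<and>
       (\<forall>y \<in> carrier B. \<gamma> (g y) = g' (\<beta> y)))"

definition std_A :: "nat \<Rightarrow> nat \<Rightarrow> (nat \<Rightarrow> int) monoid" where
  "std_A m n = product_group {..<m} (\<lambda>j. integer_mod_group n)"

definition std_B :: "nat \<Rightarrow> nat \<Rightarrow> (nat \<Rightarrow> nat) \<Rightarrow> (nat \<Rightarrow> int) monoid" where
  "std_B m n b = product_group {..<m} (\<lambda>j. integer_mod_group (n * b j))"

definition std_C :: "nat \<Rightarrow> (nat \<Rightarrow> nat) \<Rightarrow> (nat \<Rightarrow> int) monoid" where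
  "std_C m b = product_group {..<m} (\<lambda>j. integer_mod_group (b j))"

definition std_f :: "nat \<Rightarrow> nat \<Rightarrow> (nat \<Rightarrow> nat) \<Rightarrow> (nat \<Rightarrow> int) \<Rightarrow> (nat \<Rightarrow> int)" where
  "std_f m n b x = (\<lambda>j\<in>{..<m}. (int (b j) * x j) mod int (n * b j))"

definition std_g :: "nat \<Rightarrow> (nat \<Rightarrow> nat) \<Rightarrow> (nat \<Rightarrow> int) \<Rightarrow> (nat \<Rightarrow> int)" where
  "std_g m b y = (\<lambda>j\<in>{..<m}. y j mod int (b j))"

definition fiber_product ::
  "('b1, 'm1) monoid_scheme \<Rightarrow> ('b1 \<Rightarrow> 'c) \<Rightarrow> ('b2, 'm2) monoid_scheme \<Rightarrow> ('b2 \<Rightarrow> 'c)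
   \<Rightarrow> ('b1 \<times> 'b2) monoid" where
  "fiber_product B1 g1 B2 g2 =
     (B1 \<times>\<times> B2)\<lparr>carrier := {(x, y). x \<in> carrier B1 \<and> y \<in> carrier B2 \<and> g1 x = g2 y}\<rparr>"

end

theory Submission imports Defs begin

lemma pow_product_group:
  assumes "\<And>i. i \<in> I \<Longrightarrow> group (G i)" "z \<in> carrier (product_group I G)"
  shows "z [^]\<^bsub>product_group I G\<^esub> (k::nat) = (\<lambda>i\<in>I. z i [^]\<^bsub>G i\<^esub> k)"
proof (induction k)
  case 0 then show ?case by simp
next
  case (Suc k) then show ?case
    by (simp add: fun_eq_iff)
qed

lemma comm_group_std_C: "comm_group (std_C m b)"
proof -
  have g: "group (std_C m b)" unfolding std_C_def by simp
  show ?thesis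
    by (rule group.group_comm_groupI[OF g]) (auto simp: std_C_def fun_eq_iff add.commute)
qed

lemma pow_mod_eq:
  assumes "group G" "x \<in> carrier G" "x [^]\<^bsub>G\<^esub> (N::nat) = \<one>\<^bsub>G\<^esub>"
  shows "x [^]\<^bsub>G\<^esub> (a mod N) = x [^]\<^bsub>G\<^esub> a"
proof -
  interpret group G by fact
  have "x [^]\<^bsub>G\<^esub> a = x [^]\<^bsub>G\<^esub> (N * (a div N) + a mod N)" by simp
  also have "\<dots> = (x [^]\<^bsub>G\<^esub> N) [^]\<^bsub>G\<^esub> (a div N) \<otimes>\<^bsub>G\<^esub> x [^]\<^bsub>G\<^esub> (a mod N)"
    using assms(2) by (simp only: nat_pow_mult nat_pow_pow nat_pow_closed)
  also have "\<dots> = x [^]\<^bsub>G\<^esub> (a mod N)" using assms by simp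
  finally show ?thesis by simp
qed

lemma hom_finprod_comm:
  assumes "comm_group G" "comm_group H" "h \<in> hom G H" "finite A" "f \<in> A \<rightarrow> carrier G"
  shows "h (finprod G f A) = finprod H (\<lambda>i. h (f i)) A"
  using assms(4,5)
proof (induction A rule: finite_induct)
  case empty
  interpret G: comm_group G by fact
  interpret H: comm_group H by fact
  show ?case using assms by (simp add: hom_one)
next
  case (insert a A)
  interpret G: comm_group G by fact
  interpret H: comm_group H by fact
  have hc: "\<And>x. x \<in> carrier G \<Longrightarrow> h x \<in> carrier H" using assms(3) by (auto simp: hom_def)
  have "h (finprod G f (insert a A)) = h (f a \<otimes>\<^bsub>G\<^esub> finprod G f A)"
    using insert by simp
  also have "\<dots> = h (f a) \<otimes>\<^bsub>H\<^esub> h (finprod G f A)"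
    using assms(3) insert by (simp add: hom_mult)
  also have "\<dots> = finprod H (\<lambda>i. h (f i)) (insert a A)"
    using insert hc by (simp add: Pi_def)
  finally show ?case .
qed

lemma std_C_decomp:
  assumes "\<forall>j<m. b j > 0" "p \<le> m" "\<forall>j<m. e j \<in> {0..<int (b j)}"
  shows "finprod (std_C m b) (\<lambda>j. (\<lambda>i\<in>{..<m}. if i = j then e j else 0)) {..<p}
       = (\<lambda>i\<in>{..<m}. if i < p then e i else 0)"
  using assms(2)
proof (induction p)
  case 0
  interpret comm_group "std_C m b" by (rule comm_group_std_C)
  show ?case by (simp only: lessThan_0 finprod_empty) (simp add: std_C_def fun_eq_iff)
next
  case (Suc p)
  interpret comm_group "std_C m b" by (rule comm_group_std_C)
  have cl: "(\<lambda>i\<in>{..<m}. if i = j then e j else 0) \<in> carrier (std_C m b)" if "j < m" for j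
    using assms that by (auto simp: std_C_def carrier_integer_mod_group)
  have "finprod (std_C m b) (\<lambda>j. (\<lambda>i\<in>{..<m}. if i = j then e j else 0)) {..<Suc p}
     = (\<lambda>i\<in>{..<m}. if i = p then e p else 0) \<otimes>\<^bsub>std_C m b\<^esub>
       finprod (std_C m b) (\<lambda>j. (\<lambda>i\<in>{..<m}. if i = j then e j else 0)) {..<p}"
    using Suc.prems cl by (simp add: lessThan_Suc Pi_def)
  also have "\<dots> = (\<lambda>i\<in>{..<m}. if i = p then e p else 0) \<otimes>\<^bsub>std_C m b\<^esub> (\<lambda>i\<in>{..<m}. if i < p then e i else 0)"
    using Suc.prems by (subst Suc.IH) auto
  also have "\<dots> = (\<lambda>i\<in>{..<m}. if i < Suc p then e i else 0)"
    using Suc.prems assms by (auto simp: std_C_def fun_eq_iff less_Suc_eq)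
  finally show ?case .
qed

theorem mainTheorem5:
  fixes A1 :: "('a, 'm1) monoid_scheme" and B1 :: "('b, 'm2) monoid_scheme"
    and C :: "('c, 'm3) monoid_scheme"
    and A2 :: "('d, 'm4) monoid_scheme" and B2 :: "('e, 'm5) monoid_scheme"
    and f1 :: "'a \<Rightarrow> 'b" and g1 :: "'b \<Rightarrow> 'c"
    and f2 :: "'d \<Rightarrow> 'e" and g2 :: "'e \<Rightarrow> 'c"
    and n m :: nat and b :: "nat \<Rightarrow> nat"
  assumes "comm_group A1" "comm_group B1" "comm_group C" "comm_group A2" "comm_group B2"
    and "finite (carrier A1)" "finite (carrier B1)" "finite (carrier C)"
    and "finite (carrier A2)" "finite (carrier B2)"
    and ses1: "short_exact A1 f1 B1 g1 C"
    and ses2: "short_exact A2 f2 B2 g2 C"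
    and "n > 0" and "\<forall>j<m. b j > 0"
    and std: "ses_iso A2 f2 B2 g2 C (std_A m n) (std_f m n b) (std_B m n b) (std_g m b) (std_C m b)"
    and ann: "\<forall>x \<in> carrier A1. x [^]\<^bsub>A1\<^esub> n = \<one>\<^bsub>A1\<^esub>"
  shows "\<exists>s \<in> hom B2 (fiber_product B1 g1 B2 g2). \<forall>y \<in> carrier B2. snd (s y) = y"
proof -
  note ses1' = ses1[unfolded short_exact_def] and ses2' = ses2[unfolded short_exact_def]
  from std obtain \<alpha> \<beta> \<gamma> where \<beta>i: "\<beta> \<in> iso B2 (std_B m n b)" and \<gamma>i: "\<gamma> \<in> iso C (std_C m b)"
    and sq: "\<forall>y\<in>carrier B2. \<gamma> (g2 y) = std_g m b (\<beta> y)"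
    unfolding ses_iso_def by blast
  interpret A1: comm_group A1 by fact
  interpret B1: comm_group B1 by fact
  interpret C: comm_group C by fact
  interpret B2: comm_group B2 by fact
  interpret SC: comm_group "std_C m b" by (rule comm_group_std_C)
  have f1h: "f1 \<in> hom A1 B1" and g1h: "g1 \<in> hom B1 C" and g1s: "g1 ` carrier B1 = carrier C"
    and ker: "f1 ` carrier A1 = kernel B1 C g1" using ses1' by auto
  have g2h: "g2 \<in> hom B2 C" using ses2' by auto
  have \<beta>h: "\<beta> \<in> hom B2 (std_B m n b)" using \<beta>i by (simp add: iso_iff)
  have \<gamma>h: "\<gamma> \<in> hom C (std_C m b)" and \<gamma>s: "\<gamma> ` carrier C = carrier (std_C m b)"
    and \<gamma>inj: "inj_on \<gamma> (carrier C)" using \<gamma>i by (auto simp: iso_iff)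
  have grpSC: "group (std_C m b)" by (simp add: std_C_def)
  have grpSB: "group (std_B m n b)" by (simp add: std_B_def)
  have bpos: "\<And>j. j < m \<Longrightarrow> b j > 0" using assms by auto
  define \<delta> where "\<delta> j = (\<lambda>i\<in>{..<m}. if i = j then 1 mod int (b j) else 0)" for j
  have \<delta>c: "\<delta> j \<in> carrier (std_C m b)" if "j < m" for j
    using bpos that by (auto simp: std_C_def carrier_integer_mod_group \<delta>_def)
  define c where "c j = inv_into (carrier C) \<gamma> (\<delta> j)" for j
  have cc: "c j \<in> carrier C" "\<gamma> (c j) = \<delta> j" if "j < m" for j
    using \<delta>c[OF that] \<gamma>s unfolding c_def by (auto intro: inv_into_into f_inv_into_f)
  define x where "x j = inv_into (carrier B1) g1 (c j)" for j
  have xc: "x j \<in> carrier B1" "g1 (x j) = c j" if "j < m" for j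
    using cc[OF that] g1s unfolding x_def by (auto intro: inv_into_into f_inv_into_f)
  have \<delta>pow: "\<delta> j [^]\<^bsub>std_C m b\<^esub> (k::nat) = (\<lambda>i\<in>{..<m}. if i = j then int k mod int (b j) else 0)"
    if "j < m" for j k
  proof -
    have "\<delta> j [^]\<^bsub>std_C m b\<^esub> k = (\<lambda>i\<in>{..<m}. \<delta> j i [^]\<^bsub>integer_mod_group (b i)\<^esub> k)"
      using \<delta>c[OF that] unfolding std_C_def by (subst pow_product_group) auto
    also have "\<dots> = (\<lambda>i\<in>{..<m}. if i = j then int k mod int (b j) else 0)"
      by (auto simp: \<delta>_def fun_eq_iff mod_mult_right_eq)
    finally show ?thesis .
  qed
  have cpow: "c j [^]\<^bsub>C\<^esub> b j = \<one>\<^bsub>C\<^esub>" if "j < m" for j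
  proof -
    have "\<gamma> (c j [^]\<^bsub>C\<^esub> b j) = \<delta> j [^]\<^bsub>std_C m b\<^esub> b j"
      using cc[OF that] hom_nat_pow[OF \<gamma>h _ C.is_group grpSC] by simp
    also have "\<dots> = \<one>\<^bsub>std_C m b\<^esub>"
      using that by (simp only: \<delta>pow) (auto simp: std_C_def fun_eq_iff)
    also have "\<dots> = \<gamma> \<one>\<^bsub>C\<^esub>" using \<gamma>h by (simp add: hom_one C.is_group grpSC)
    finally show ?thesis using \<gamma>inj cc[OF that] by (auto dest: inj_onD)
  qed
  have xpow: "x j [^]\<^bsub>B1\<^esub> (b j * n) = \<one>\<^bsub>B1\<^esub>" if "j < m" for j
  proof -
    have "g1 (x j [^]\<^bsub>B1\<^esub> b j) = \<one>\<^bsub>C\<^esub>"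
      using xc[OF that] cpow[OF that] hom_nat_pow[OF g1h _ B1.is_group C.is_group] by simp
    then have "x j [^]\<^bsub>B1\<^esub> b j \<in> kernel B1 C g1"
      using xc[OF that] by (simp add: kernel_def)
    then obtain a where a: "a \<in> carrier A1" "f1 a = x j [^]\<^bsub>B1\<^esub> b j"
      using ker by (metis imageE)
    have "x j [^]\<^bsub>B1\<^esub> (b j * n) = (x j [^]\<^bsub>B1\<^esub> b j) [^]\<^bsub>B1\<^esub> n"
      using xc[OF that] by (simp add: B1.nat_pow_pow)
    also have "\<dots> = f1 (a [^]\<^bsub>A1\<^esub> n)"
      using a hom_nat_pow[OF f1h _ A1.is_group B1.is_group] by simp
    also have "\<dots> = \<one>\<^bsub>B1\<^esub>" using a ann f1h by (simp add: hom_one A1.is_group B1.is_group)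
    finally show ?thesis .
  qed
  have \<beta>c: "\<beta> y \<in> carrier (std_B m n b)" if "y \<in> carrier B2" for y
    using \<beta>h that by (auto simp: hom_def)
  have \<beta>r: "0 \<le> \<beta> y j \<and> \<beta> y j < int (n * b j)" if "y \<in> carrier B2" "j < m" for y j
  proof -
    have "n * b j \<noteq> 0" using bpos[OF that(2)] \<open>n > 0\<close> by simp
    moreover have "\<beta> y j \<in> carrier (integer_mod_group (n * b j))"
      using \<beta>c[OF that(1)] that(2) by (auto simp: std_B_def PiE_iff)
    ultimately show ?thesis by (simp add: carrier_integer_mod_group)
  qed
  define H where "H y = finprod B1 (\<lambda>j. x j [^]\<^bsub>B1\<^esub> nat (\<beta> y j)) {..<m}" for y
  have Hc: "H y \<in> carrier B1" for y
    unfolding H_def by (rule B1.finprod_closed) (use xc in auto)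
  have Hg: "g1 (H y) = g2 y" if y: "y \<in> carrier B2" for y
  proof -
    define k where "k j = nat (\<beta> y j)" for j
    have "g1 (H y) = finprod C (\<lambda>j. g1 (x j [^]\<^bsub>B1\<^esub> k j)) {..<m}"
      unfolding H_def k_def using xc
      by (intro hom_finprod_comm[OF \<open>comm_group B1\<close> \<open>comm_group C\<close> g1h]) auto
    also have "\<dots> = finprod C (\<lambda>j. c j [^]\<^bsub>C\<^esub> k j) {..<m}"
      using xc cc hom_nat_pow[OF g1h _ B1.is_group C.is_group]
      by (intro C.finprod_cong') auto
    finally have e1: "g1 (H y) = finprod C (\<lambda>j. c j [^]\<^bsub>C\<^esub> k j) {..<m}" .
    have "\<gamma> (g1 (H y)) = finprod (std_C m b) (\<lambda>j. \<gamma> (c j [^]\<^bsub>C\<^esub> k j)) {..<m}"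
      unfolding e1 using cc
      by (intro hom_finprod_comm[OF \<open>comm_group C\<close> comm_group_std_C \<gamma>h]) auto
    also have "\<dots> = finprod (std_C m b) (\<lambda>j. (\<lambda>i\<in>{..<m}. if i = j then int (k j) mod int (b j) else 0)) {..<m}"
    proof (intro SC.finprod_cong')
      show "(\<lambda>j. (\<lambda>i\<in>{..<m}. if i = j then int (k j) mod int (b j) else 0)) \<in> {..<m} \<rightarrow> carrier (std_C m b)"
        using bpos by (auto simp: std_C_def carrier_integer_mod_group)
      fix j assume "j \<in> {..<m}"
      then show "\<gamma> (c j [^]\<^bsub>C\<^esub> k j) = (\<lambda>i\<in>{..<m}. if i = j then int (k j) mod int (b j) else 0)"
        using cc hom_nat_pow[OF \<gamma>h _ C.is_group grpSC] \<delta>pow by simp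
    qed simp
    also have "\<dots> = (\<lambda>i\<in>{..<m}. if i < m then int (k i) mod int (b i) else 0)"
      using bpos by (intro std_C_decomp) auto
    also have "\<dots> = std_g m b (\<beta> y)"
      using \<beta>r[OF y] by (auto simp: std_g_def k_def fun_eq_iff)
    also have "\<dots> = \<gamma> (g2 y)" using sq y by simp
    finally show ?thesis
      using \<gamma>inj Hc[of y] y g2h g1h by (auto dest!: inj_onD simp: hom_def)
  qed
  have Hm: "H (y \<otimes>\<^bsub>B2\<^esub> y') = H y \<otimes>\<^bsub>B1\<^esub> H y'" if y: "y \<in> carrier B2" "y' \<in> carrier B2" for y y'
  proof -
    have \<beta>m: "\<beta> (y \<otimes>\<^bsub>B2\<^esub> y') = \<beta> y \<otimes>\<^bsub>std_B m n b\<^esub> \<beta> y'"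
      using \<beta>h y by (simp add: hom_mult)
    have "H (y \<otimes>\<^bsub>B2\<^esub> y') = finprod B1 (\<lambda>j. x j [^]\<^bsub>B1\<^esub> nat (\<beta> y j) \<otimes>\<^bsub>B1\<^esub> x j [^]\<^bsub>B1\<^esub> nat (\<beta> y' j)) {..<m}"
      unfolding H_def
    proof (intro B1.finprod_cong')
      fix j assume j: "j \<in> {..<m}"
      have "nat (\<beta> (y \<otimes>\<^bsub>B2\<^esub> y') j) = (nat (\<beta> y j) + nat (\<beta> y' j)) mod (b j * n)"
        using \<beta>r[OF y(1), of j] \<beta>r[OF y(2), of j] j unfolding \<beta>m
        by (simp add: std_B_def nat_mod_distrib nat_add_distrib mult.commute nat_mult_distrib)
      then show "x j [^]\<^bsub>B1\<^esub> nat (\<beta> (y \<otimes>\<^bsub>B2\<^esub> y') j) = x j [^]\<^bsub>B1\<^esub> nat (\<beta> y j) \<otimes>\<^bsub>B1\<^esub> x j [^]\<^bsub>B1\<^esub> nat (\<beta> y' j)"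
        using pow_mod_eq[OF B1.is_group xc(1) xpow] j by (simp add: B1.nat_pow_mult xc)
    qed (use xc in auto)
    also have "\<dots> = H y \<otimes>\<^bsub>B1\<^esub> H y'"
      unfolding H_def using xc by (intro B1.finprod_multf) auto
    finally show ?thesis .
  qed
  show ?thesis
  proof (intro bexI[of _ "\<lambda>y. (H y, y)"] ballI)
    show "(\<lambda>y. (H y, y)) \<in> hom B2 (fiber_product B1 g1 B2 g2)"
      unfolding hom_def fiber_product_def using Hc Hg Hm by (auto simp: DirProd_def)
  qed simp
qed

end
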